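(* Let $r\ge2$, $n\ge2r$, and let $H\subseteq\binom{\Omega_n}{r}$ be $M_1^{(r)}$-saturated. Then there exist $\ell\ge1$ and distinct vertices $w_1,\dots,w_{2\ell+1}\in\Omega_n$ with $w_1<w_3<w_5<\dots<w_{2\ell+1}<w_2<w_4<\dots<w_{2\ell}<w_1$ (clockwise cyclic order) such that $\lambda(w_i)=w_{i+1}$ and $\rho(w_i)=w_{i-1}$ for all $i$, with indices taken mod $2\ell+1$.
   Context: $\Omega_n=\{v_0,\dots,v_{n-1}\}$ with cyclic order $v_0<\dots<v_{n-1}<v_0$, indices mod $n$. For distinct vertices $u,w$, $(u,w)$ is the set of vertices strictly between $u$ and $w$ moving clockwise from $u$ to $w$ and $[u,w]=(u,w)\cup\{u,w\}$. An $r$-cgh $H\subseteq\binom{\Omega_n}{r}$ is $M_1^{(r)}$-saturated if there are no edges $h_1,h_2\in H$ and vertices $u\neq u'$ with $h_1\subseteq[u,u']$ and $h_2\cap[u,u']=\emptyset$, but for every $e\in\binom{\Omega_n}{r}\setminus H$ such a pair exists in $H\cup\{e\}$. In such $H$ every vertex lies in an edge. $\lambda(v_i)$ is the vertex $u$ such that some $h\in H$ with $v_i\in h$ satisfies $h\subseteq[u,v_i]$, while no $h\in H$ with $v_i\in h$ satisfies $h\subseteq[u',v_i]$, $u'$ the clockwise successor of $u$. $\rho(v_i)$ is the vertex $u$ such that some $h\in H$ with $v_i\in h$ satisfies $h\subseteq[v_i,u]$ but none with $h\subseteq[v_i,u'']$, $u''$ the clockwise predecessor of $u$. *)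

theory Defs
  imports Main
begin

text \<open>Vertices of Omega_n are the naturals 0..n-1 (v_i = i), with the cyclic
order 0 < 1 < ... < n-1 < 0; all index arithmetic is mod n.\<close>

definition vsucc :: "nat \<Rightarrow> nat \<Rightarrow> nat" where
  "vsucc n u = (u + 1) mod n"

definition vpred :: "nat \<Rightarrow> nat \<Rightarrow> nat" where
  "vpred n u = (u + n - 1) mod n"

text \<open>Closed clockwise interval [u,w] (for u, w < n).\<close>
definition cint :: "nat \<Rightarrow> nat \<Rightarrow> nat \<Rightarrow> nat set" where
  "cint n u w = {x. x < n \<and> (x + n - u) mod n \<le> (w + n - u) mod n}"

definition r_sets :: "nat \<Rightarrow> nat \<Rightarrow> nat set set" where
  "r_sets n r = {e. e \<subseteq> {0..<n} \<and> card e = r}"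

definition has_M1 :: "nat \<Rightarrow> nat set set \<Rightarrow> bool" where
  "has_M1 n H = (\<exists>h1\<in>H. \<exists>h2\<in>H. \<exists>u<n. \<exists>u'<n. u \<noteq> u' \<and>
       h1 \<subseteq> cint n u u' \<and> h2 \<inter> cint n u u' = {})"

definition M1_saturated :: "nat \<Rightarrow> nat \<Rightarrow> nat set set \<Rightarrow> bool" where
  "M1_saturated n r H = (H \<subseteq> r_sets n r \<and> \<not> has_M1 n H \<and>
       (\<forall>e \<in> r_sets n r - H. has_M1 n (insert e H)))"

definition lam :: "nat \<Rightarrow> nat set set \<Rightarrow> nat \<Rightarrow> nat" where
  "lam n H v = (THE u. u < n \<and>
      (\<exists>h\<in>H. v \<in> h \<and> h \<subseteq> cint n u v) \<and>
      \<not> (\<exists>h\<in>H. v \<in> h \<and> h \<subseteq> cint n (vsucc n u) v))"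

definition rho :: "nat \<Rightarrow> nat set set \<Rightarrow> nat \<Rightarrow> nat" where
  "rho n H v = (THE u. u < n \<and>
      (\<exists>h\<in>H. v \<in> h \<and> h \<subseteq> cint n v u) \<and>
      \<not> (\<exists>h\<in>H. v \<in> h \<and> h \<subseteq> cint n v (vpred n u)))"

definition cyc_ordered :: "nat list \<Rightarrow> bool" where
  "cyc_ordered xs = (\<exists>k. sorted_wrt (<) (rotate k xs))"

end

theory Submission
  imports Defs
begin

definition dd :: "nat \<Rightarrow> nat \<Rightarrow> nat \<Rightarrow> nat" where
  "dd n a b = (b + n - a) mod n"

lemma dd_if: "a < n \<Longrightarrow> b < n \<Longrightarrow> dd n a b = (if a \<le> b then b - a else b + n - a)"
  unfolding dd_def by (auto simp: mod_if)

lemma dd_lt: "a < n \<Longrightarrow> dd n a b < n"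
  unfolding dd_def by auto

lemma dd_self[simp]: "dd n a a = 0"
  unfolding dd_def by auto

lemma dd_0_iff: "a < n \<Longrightarrow> b < n \<Longrightarrow> dd n a b = 0 \<longleftrightarrow> a = b"
  by (auto simp: dd_if split: if_splits)

lemma dd_add: "a < n \<Longrightarrow> b < n \<Longrightarrow> c < n \<Longrightarrow> dd n a c = (dd n a b + dd n b c) mod n"
  by (auto simp: dd_if mod_if split: if_splits)

lemma rel_le: "a < n \<Longrightarrow> x < n \<Longrightarrow> y < n \<Longrightarrow> dd n a x \<le> dd n a y \<Longrightarrow> dd n x y = dd n a y - dd n a x"
  by (auto simp: dd_if split: if_splits)

lemma rel_gt: "a < n \<Longrightarrow> x < n \<Longrightarrow> y < n \<Longrightarrow> dd n a x > dd n a y \<Longrightarrow> dd n x y = dd n a y + n - dd n a x"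
  by (auto simp: dd_if split: if_splits)

lemma mem_cint: "a < n \<Longrightarrow> b < n \<Longrightarrow> x \<in> cint n a b \<longleftrightarrow> x < n \<and> dd n a x \<le> dd n a b"
  unfolding cint_def dd_def by auto

lemma vsucc_lt: "a < n \<Longrightarrow> vsucc n a < n" unfolding vsucc_def by auto
lemma vpred_lt: "a < n \<Longrightarrow> vpred n a < n" unfolding vpred_def by auto

lemma vsucc_if: "a < n \<Longrightarrow> vsucc n a = (if a + 1 = n then 0 else a + 1)"
  unfolding vsucc_def by auto
lemma vpred_if: "a < n \<Longrightarrow> vpred n a = (if a = 0 then n - 1 else a - 1)"
  unfolding vpred_def by (auto simp: mod_if)

lemma dd_vsucc: "a < n \<Longrightarrow> u < n \<Longrightarrow> dd n a (vsucc n u) = (if dd n a u = n - 1 then 0 else dd n a u + 1)"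
  unfolding vsucc_def by (auto simp: dd_if mod_if split: if_splits)
lemma dd_vpred: "a < n \<Longrightarrow> u < n \<Longrightarrow> dd n a (vpred n u) = (if dd n a u = 0 then n - 1 else dd n a u - 1)"
  unfolding vpred_def by (auto simp: dd_if mod_if split: if_splits)

lemma inj_dd: "a < n \<Longrightarrow> x < n \<Longrightarrow> y < n \<Longrightarrow> dd n a x = dd n a y \<Longrightarrow> x = y"
  by (auto simp: dd_if split: if_splits)

lemma AR10: "a<n \<Longrightarrow> b<n \<Longrightarrow> c<n \<Longrightarrow> x<n \<Longrightarrow> y<n \<Longrightarrow> 0 < dd n a c \<Longrightarrow> dd n a c < dd n a b \<Longrightarrow>
   0 < dd n a x \<Longrightarrow> dd n a x < dd n a c \<Longrightarrow> 0 < dd n x y \<Longrightarrow> dd n x y \<le> dd n x b \<Longrightarrow> z \<in> cint n b a \<Longrightarrow> z \<in> cint n y (vpred n x)"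
proof -
  assume h: "a<n" "b<n" "c<n" "x<n" "y<n" "0 < dd n a c" "dd n a c < dd n a b"
   "0 < dd n a x" "dd n a x < dd n a c" "0 < dd n x y" "dd n x y \<le> dd n x b" "z \<in> cint n b a"
  have z: "z < n" using h by (auto simp: mem_cint)
  define X where "X = dd n a x"
  define B where "B = dd n a b"
  define Y where "Y = dd n a y"
  define Z where "Z = dd n a z"
  have xb: "dd n x b = B - X" using h rel_le[of a n x b] unfolding X_def B_def by auto
  have Y: "X < Y \<and> Y \<le> B"
  proof (cases "X \<le> Y")
    case True
    then show ?thesis using h xb rel_le[of a n x y] unfolding X_def Y_def B_def by auto
  next
    case False
    then show ?thesis using h xb rel_gt[of a n x y] dd_lt[of a n b] unfolding X_def Y_def B_def by auto
  qed
  have ba: "dd n b a = n - B" using h rel_gt[of a n b a] unfolding B_def by auto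
  have Zc: "Z = 0 \<or> B \<le> Z"
  proof (cases "B \<le> Z")
    case False
    then show ?thesis using h ba rel_gt[of a n b z] z dd_lt[of a n b] unfolding B_def Z_def by (auto simp: mem_cint)
  qed auto
  have xp: "dd n a (vpred n x) = X - 1" using h dd_vpred[of a n x] unfolding X_def by auto
  have yx: "dd n y (vpred n x) = X - 1 + n - Y"
    using rel_gt[of a n y "vpred n x"] h xp Y vpred_lt[of x n] unfolding X_def Y_def by auto
  show ?thesis
  proof (cases "Z = 0")
    case True
    then have "dd n y z = n - Y" using rel_gt[of a n y z] h z Y unfolding Y_def Z_def by auto
    then show ?thesis using yx z h Y vpred_lt[of x n] unfolding X_def by (auto simp: mem_cint)
  next
    case False
    then have "dd n y z = Z - Y" using rel_le[of a n y z] h z Y Zc unfolding Y_def Z_def by auto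
    then show ?thesis using yx z h Y Zc False vpred_lt[of x n] dd_lt[of a n z] unfolding X_def Z_def by (auto simp: mem_cint)
  qed
qed

lemma compl2: "u < n \<Longrightarrow> v < n \<Longrightarrow> y < n \<Longrightarrow> y \<notin> cint n u v \<Longrightarrow> x \<in> cint n u v \<Longrightarrow> x \<notin> cint n (vsucc n v) (vpred n u)"
  by (auto simp: mem_cint dd_if vsucc_if vpred_if split: if_splits)

lemma AR1: "a < n \<Longrightarrow> b < n \<Longrightarrow> vsucc n b \<noteq> a \<Longrightarrow> dd n a (vsucc n b) = dd n a b + 1"
  by (auto simp: dd_if vsucc_if split: if_splits)
lemma AR2: "a < n \<Longrightarrow> b < n \<Longrightarrow> vpred n a \<noteq> b \<Longrightarrow> dd n (vpred n a) b = dd n a b + 1"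
  by (auto simp: dd_if vpred_if split: if_splits)
lemma AR3: "q < n \<Longrightarrow> p < n \<Longrightarrow> x \<in> cint n q p \<Longrightarrow> x \<noteq> q \<Longrightarrow> x \<in> cint n (vsucc n q) p"
  by (auto simp: mem_cint dd_if vsucc_if split: if_splits)
lemma AR4: "q < n \<Longrightarrow> p < n \<Longrightarrow> x \<in> cint n q p \<Longrightarrow> x \<noteq> p \<Longrightarrow> x \<in> cint n q (vpred n p)"
  by (auto simp: mem_cint dd_if vpred_if split: if_splits)
lemma cint_same: "a < n \<Longrightarrow> cint n a a = {a}"
  by (auto simp: mem_cint dd_if split: if_splits)
lemma vsucc_vpred: "a < n \<Longrightarrow> vsucc n (vpred n a) = a"
  by (auto simp: vsucc_if vpred_if)
lemma dd_sym: "a < n \<Longrightarrow> b < n \<Longrightarrow> a \<noteq> b \<Longrightarrow> dd n a b + dd n b a = n"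
  by (auto simp: dd_if)

lemma dd_shift: "a < n \<Longrightarrow> k < n \<Longrightarrow> dd n a ((a + k) mod n) = k"
  by (auto simp: dd_def mod_if)

lemma card_range:
  assumes "a < n" "hi < n"
  shows "card {x. x < n \<and> lo \<le> dd n a x \<and> dd n a x \<le> hi} = Suc hi - lo"
proof -
  let ?S = "{x. x < n \<and> lo \<le> dd n a x \<and> dd n a x \<le> hi}"
  have "bij_betw (dd n a) ?S {lo..hi}"
    unfolding bij_betw_def
  proof
    show "inj_on (dd n a) ?S" using inj_dd[of a n] assms by (auto simp: inj_on_def)
    show "dd n a ` ?S = {lo..hi}"
    proof
      show "dd n a ` ?S \<subseteq> {lo..hi}" by auto
      show "{lo..hi} \<subseteq> dd n a ` ?S"
      proof
        fix k assume k: "k \<in> {lo..hi}"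
        then have "k < n" using assms by auto
        then have "dd n a ((a + k) mod n) = k" "(a + k) mod n < n"
          using dd_shift[of a n k] assms by auto
        then show "k \<in> dd n a ` ?S" using k by (metis (mono_tags, lifting) atLeastAtMost_iff image_eqI mem_Collect_eq)
      qed
    qed
  qed
  then show ?thesis using bij_betw_same_card by fastforce
qed

lemma cint_range: "a < n \<Longrightarrow> b < n \<Longrightarrow> cint n a b = {x. x < n \<and> 0 \<le> dd n a x \<and> dd n a x \<le> dd n a b}"
  by (auto simp: mem_cint)

lemma card_cint: "a < n \<Longrightarrow> b < n \<Longrightarrow> card (cint n a b) = Suc (dd n a b)"
  using card_range[of a n "dd n a b" 0] dd_lt[of a n b] cint_range[of a n b] by simp

lemma dd_vsucc_left: "a < n \<Longrightarrow> b < n \<Longrightarrow> dd n (vsucc n a) b = (if a = b then n - 1 else dd n a b - 1)"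
  by (auto simp: dd_if vsucc_if split: if_splits)
lemma dd_vpred_right: "a < n \<Longrightarrow> b < n \<Longrightarrow> dd n a (vpred n b) = (if a = b then n - 1 else dd n a b - 1)"
  by (auto simp: dd_if vpred_if split: if_splits)
lemma inj_dd_left: "a < n \<Longrightarrow> b < n \<Longrightarrow> p < n \<Longrightarrow> dd n a p = dd n b p \<Longrightarrow> a = b"
  by (auto simp: dd_if split: if_splits)
lemma cint_end: "a < n \<Longrightarrow> p < n \<Longrightarrow> x \<in> cint n a p \<longleftrightarrow> x < n \<and> dd n x p \<le> dd n a p"
  by (auto simp: mem_cint dd_if split: if_splits)
lemma cint_left: "a < n \<Longrightarrow> b < n \<Longrightarrow> a \<in> cint n a b" by (auto simp: mem_cint)
lemma cint_right: "a < n \<Longrightarrow> b < n \<Longrightarrow> b \<in> cint n a b" by (auto simp: mem_cint)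
lemma cint_sub: "x \<in> cint n a b \<Longrightarrow> x < n" by (auto simp: cint_def)

lemma AR5:
  assumes "u < n" "q < n" "p < n" "p \<noteq> q" "u \<noteq> q"
  shows "cint n u p \<subseteq> cint n (vsucc n q) p \<or> cint n q p \<subseteq> cint n (vsucc n u) p"
proof (cases "dd n u p \<le> dd n q p - 1")
  case True
  have "dd n (vsucc n q) p = dd n q p - 1" using dd_vsucc_left[of q n p] assms by auto
  then have "cint n u p \<subseteq> cint n (vsucc n q) p"
    using True assms vsucc_lt[of q n] by (auto simp: cint_end)
  then show ?thesis by blast
next
  case False
  have "dd n u p \<noteq> dd n q p" using inj_dd_left[of u n q p] assms by auto
  then have g: "dd n u p > dd n q p" using False by auto
  then have "u \<noteq> p" by auto
  then have "dd n (vsucc n u) p = dd n u p - 1" using dd_vsucc_left[of u n p] assms by auto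
  then have "cint n q p \<subseteq> cint n (vsucc n u) p"
    using g assms vsucc_lt[of u n] by (auto simp: cint_end)
  then show ?thesis by blast
qed

lemma AR6:
  assumes "u < n" "q < n" "p < n" "p \<noteq> q" "u \<noteq> p"
  shows "cint n q u \<subseteq> cint n q (vpred n p) \<or> cint n q p \<subseteq> cint n q (vpred n u)"
proof (cases "dd n q u \<le> dd n q p - 1")
  case True
  have "dd n q (vpred n p) = dd n q p - 1" using dd_vpred_right[of q n p] assms by auto
  then have "cint n q u \<subseteq> cint n q (vpred n p)"
    using True assms vpred_lt[of p n] by (auto simp: mem_cint)
  then show ?thesis by blast
next
  case False
  have "dd n q u \<noteq> dd n q p" using inj_dd[of q n u p] assms by auto
  then have g: "dd n q u > dd n q p" using False by auto
  then have "u \<noteq> q" by auto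
  then have "dd n q (vpred n u) = dd n q u - 1" using dd_vpred_right[of q n u] assms by auto
  then have "cint n q p \<subseteq> cint n q (vpred n u)"
    using g assms vpred_lt[of u n] by (auto simp: mem_cint)
  then show ?thesis by blast
qed

lemma mem_base: "a < n \<Longrightarrow> u < n \<Longrightarrow> v < n \<Longrightarrow> y < n \<Longrightarrow> y \<in> cint n u v \<longleftrightarrow>
  (if dd n a u \<le> dd n a y then dd n a y - dd n a u else dd n a y + n - dd n a u) \<le>
  (if dd n a u \<le> dd n a v then dd n a v - dd n a u else dd n a v + n - dd n a u)"
  by (auto simp: mem_cint dd_if split: if_splits)

lemma INT_IN:
  assumes "c < n" "d < n" "u < n" "v < n" "z < n" "x < n" "dd n c d + 2 < n"
    "z \<in> cint n c d" "z \<in> cint n u v" "vpred n c \<notin> cint n u v" "vsucc n d \<notin> cint n u v"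
    "x \<in> cint n u v"
  shows "x \<in> cint n c d"
proof -
  have p1: "dd n c (vpred n c) = n - 1" using dd_vpred_right[of c n c] assms by simp
  have p2: "dd n c (vsucc n d) = dd n c d + 1" using AR1[of c n d] dd_vsucc[of c n d] assms by auto
  have b: "dd n c u < n" "dd n c v < n" "dd n c z < n" "dd n c x < n"
    using dd_lt assms by auto
  show ?thesis using assms p1 p2 b vpred_lt[of c n] vsucc_lt[of d n]
    by (auto simp: mem_base[of c] split: if_splits; arith)
qed

definition btw :: "nat \<Rightarrow> nat \<Rightarrow> nat \<Rightarrow> nat \<Rightarrow> bool" where
  "btw n a x b \<longleftrightarrow> 0 < dd n a x \<and> dd n a x < dd n a b"

lemma TWO_a: "x \<noteq> y \<Longrightarrow> x < n \<Longrightarrow> y < n \<Longrightarrow> u < n \<Longrightarrow> u \<noteq> x \<Longrightarrow> u \<noteq> y \<Longrightarrow> btw n x u y \<or> btw n y u x"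
  unfolding btw_def by (auto simp: dd_if split: if_splits)

lemma TWO_b:
  assumes "u < n" "v < n" "x < n" "y < n" "z < n" "y \<notin> cint n u v" "btw n x u y" "z \<in> cint n u v"
  shows "btw n x z y"
proof -
  have u: "0 < dd n x u" "dd n x u < dd n x y" using assms(7) unfolding btw_def by auto
  have uy: "dd n u y = dd n x y - dd n x u" using rel_le[of x n u y] assms u by auto
  have "dd n u y > dd n u v" using assms by (auto simp: mem_cint)
  moreover have "dd n u z \<le> dd n u v" using assms by (auto simp: mem_cint)
  ultimately have a: "dd n x u + dd n u z < dd n x y" using uy u by auto
  have "dd n x z = (dd n x u + dd n u z) mod n" using dd_add[of x n u z] assms by auto
  also have "\<dots> = dd n x u + dd n u z" using a dd_lt[of x n y] assms by auto
  finally show ?thesis using a u unfolding btw_def by auto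
qed

lemma M1:
  assumes "p < n" "q < n" "2 \<le> dd n p q" "btw n q z (vsucc n p)" "z < n"
  shows "z \<in> cint n (vsucc n q) p"
proof -
  have pq: "p \<noteq> q" using assms by auto
  have "vsucc n p \<noteq> q"
  proof
    assume "vsucc n p = q"
    then have "dd n p q = 1" using AR1[of p n p] assms by (metis dd_self dd_vsucc_left less_nat_zero_code
        pq add_0 less_one not_gr_zero)
    then show False using assms by auto
  qed
  then have "dd n q (vsucc n p) = dd n q p + 1" using AR1[of q n p] assms by auto
  then have "0 < dd n q z" "dd n q z \<le> dd n q p" using assms(4) unfolding btw_def by auto
  then have "z \<noteq> q" "dd n (vsucc n q) z = dd n q z - 1" "dd n (vsucc n q) p = dd n q p - 1"
    using dd_vsucc_left[of q n z] dd_vsucc_left[of q n p] assms pq by auto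
  then show ?thesis using \<open>dd n q z \<le> dd n q p\<close> assms vsucc_lt[of q n] by (auto simp: mem_cint)
qed

lemma vsucc_ne: "p < n \<Longrightarrow> q < n \<Longrightarrow> 2 \<le> dd n p q \<Longrightarrow> vsucc n p \<noteq> q"
proof
  assume a: "p < n" "q < n" "2 \<le> dd n p q" "vsucc n p = q"
  have "n > 2" using a dd_lt[of p n q] by auto
  then have "dd n p (vsucc n p) = 1" using dd_vsucc[of p n p] a by auto
  then show False using a by auto
qed

lemma REL: "a < n \<Longrightarrow> x < n \<Longrightarrow> y < n \<Longrightarrow> dd n x y = (if dd n a x \<le> dd n a y then dd n a y - dd n a x else dd n a y + n - dd n a x)"
  using rel_le[of a n x y] rel_gt[of a n x y] by auto

lemma M2:
  assumes "p < n" "q < n" "2 \<le> dd n p q" "btw n (vsucc n p) z q" "z < n"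
  shows "z \<in> cint n (vsucc n p) (vpred n q)"
proof -
  have ne: "vsucc n p \<noteq> q" using vsucc_ne assms by auto
  have "dd n (vsucc n p) (vpred n q) = dd n (vsucc n p) q - 1"
    using dd_vpred_right[of "vsucc n p" n q] ne assms vsucc_lt[of p n] by auto
  then show ?thesis using assms vsucc_lt[of p n] vpred_lt[of q n] unfolding btw_def by (auto simp: mem_cint)
qed

lemma M4:
  assumes "p < n" "q < n" "x < n" "2 \<le> dd n p q" "2 \<le> dd n p x" "dd n p x \<le> dd n p q - 1"
  shows "x \<in> cint n (vsucc n p) q"
proof -
  have "x \<noteq> p" "q \<noteq> p" using assms by auto
  then have "dd n (vsucc n p) x = dd n p x - 1" "dd n (vsucc n p) q = dd n p q - 1"
    using dd_vsucc_left[of p n x] dd_vsucc_left[of p n q] assms by auto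
  then show ?thesis using assms vsucc_lt[of p n] by (auto simp: mem_cint)
qed

lemma AR7:
  assumes "p < n" "q < n" "t < n" "p \<noteq> q" "t \<noteq> q" "vsucc n p \<noteq> q" "dd n q (vsucc n p) \<le> dd n q t"
  shows "btw n p t q"
proof -
  have e1: "dd n q (vsucc n p) = dd n q p + 1" using AR1[of q n p] assms by auto
  have e2: "dd n q p = n - dd n p q" using dd_sym[of p n q] assms by auto
  have b: "dd n p t < n" "dd n p q < n" "0 < dd n p q" using dd_lt[of p n] dd_0_iff[of p n q] assms by auto
  show ?thesis
  proof (cases "dd n p q \<le> dd n p t")
    case True
    then have "dd n q t = dd n p t - dd n p q" using rel_le[of p n q t] assms by auto
    then show ?thesis using e1 e2 b assms by auto
  next
    case False
    then have "dd n q t = dd n p t + n - dd n p q" using rel_gt[of p n q t] assms by auto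
    then show ?thesis using e1 e2 b assms False unfolding btw_def by auto
  qed
qed

lemma compl1: "u < n \<Longrightarrow> v < n \<Longrightarrow> x < n \<Longrightarrow> x \<notin> cint n u v \<Longrightarrow> x \<in> cint n (vsucc n v) (vpred n u)"
proof -
  assume a: "u < n" "v < n" "x < n" "x \<notin> cint n u v"
  define v' where "v' = vsucc n v"
  define u' where "u' = vpred n u"
  have v': "v' = (if v + 1 = n then 0 else v + 1)" using a v'_def vsucc_if by auto
  have u': "u' = (if u = 0 then n - 1 else u - 1)" using a u'_def vpred_if by auto
  have "v' < n" "u' < n" using v' u' a by auto
  then show ?thesis using a v' u' unfolding v'_def[symmetric] u'_def[symmetric]
    by (auto simp: mem_cint dd_if split: if_splits)
qed

lemma POS_OUT:
  assumes "a < n" "b < n" "c < n" "z < n" "dd n a c \<le> dd n a b" "dd n a z < dd n a c \<or> dd n a b < dd n a z"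
  shows "z \<notin> cint n c b"
proof -
  have cb: "dd n c b = dd n a b - dd n a c" using rel_le[of a n c b] assms by auto
  have "dd n a b < n" using dd_lt[of a n b] assms by auto
  show ?thesis
  proof (cases "dd n a z < dd n a c")
    case True
    then have "dd n c z = dd n a z + n - dd n a c" using rel_gt[of a n c z] assms by auto
    then show ?thesis using cb True \<open>dd n a b < n\<close> assms by (auto simp: mem_cint)
  next
    case False
    then have "dd n c z = dd n a z - dd n a c" using rel_le[of a n c z] assms by auto
    then show ?thesis using cb False assms by (auto simp: mem_cint)
  qed
qed

lemma AR8:
  assumes "p < n" "q < n" "s < n" "x < n" "btw n p s q" "x \<in> cint n q p"
  shows "x \<notin> cint n s (vpred n q)"
proof -
  have pq: "p \<noteq> q" using assms unfolding btw_def by auto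
  have e: "dd n p (vpred n q) = dd n p q - 1" using dd_vpred_right[of p n q] pq assms by auto
  have qp: "dd n q p = n - dd n p q" using dd_sym[of p n q] pq assms by auto
  have X: "dd n p x = 0 \<or> dd n p q \<le> dd n p x"
  proof (cases "dd n p q \<le> dd n p x")
    case False
    then have "dd n q x = dd n p x + n - dd n p q" using rel_gt[of p n q x] assms by auto
    then show ?thesis using qp assms dd_lt[of p n q] by (auto simp: mem_cint)
  qed auto
  have s1: "0 < dd n p s" "dd n p s < dd n p q" using assms(5) unfolding btw_def by auto
  have c1: "dd n p s \<le> dd n p (vpred n q)" using e s1 by auto
  have c2: "dd n p x < dd n p s \<or> dd n p (vpred n q) < dd n p x" using X e s1 by auto
  show ?thesis
    using POS_OUT[of p n "vpred n q" s x, OF _ _ _ _ c1 c2] assms vpred_lt[of q n] by auto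
qed

lemma AR9:
  assumes "p < n" "q < n" "t < n" "btw n p t q" "vsucc n t \<noteq> q"
  shows "btw n p (vsucc n t) q"
proof -
  have "dd n p t < dd n p q" "dd n p q < n" using assms dd_lt[of p n q] unfolding btw_def by auto
  then have e: "dd n p (vsucc n t) = dd n p t + 1" using dd_vsucc[of p n t] assms by auto
  have "dd n p (vsucc n t) \<noteq> dd n p q" using inj_dd[of p n "vsucc n t" q] assms vsucc_lt[of t n] by auto
  then show ?thesis using e assms unfolding btw_def by auto
qed

lemma AR11:
  assumes "a < n" "b < n" "c < n" "x < n" "y < n" "z < n" "btw n a c b" "btw n a x c"
    "dd n x b < dd n x y" "z \<in> cint n y x"
  shows "z \<notin> cint n c b"
proof -
  have xb: "dd n x b = dd n a b - dd n a x" using rel_le[of a n x b] assms unfolding btw_def by auto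
  have b: "dd n a x < n" "dd n a y < n" "dd n a z < n" "dd n a b < n" "dd n a c < n" using dd_lt assms by auto
  have zyx: "dd n y z \<le> dd n y x" using assms by (auto simp: mem_cint)
  have Z: "dd n a z < dd n a c \<or> dd n a b < dd n a z"
  proof (cases "dd n a x \<le> dd n a y")
    case True
    then have "dd n x y = dd n a y - dd n a x" using rel_le[of a n x y] assms by auto
    then have Yb: "dd n a b < dd n a y" using xb assms by auto
    then have yx: "dd n y x = dd n a x + n - dd n a y" using rel_gt[of a n y x] assms True
      unfolding btw_def by auto
    show ?thesis
    proof (cases "dd n a y \<le> dd n a z")
      case True
      then show ?thesis using Yb by auto
    next
      case False
      then have "dd n y z = dd n a z + n - dd n a y" using rel_gt[of a n y z] assms by auto
      then show ?thesis using zyx yx assms b unfolding btw_def by auto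
    qed
  next
    case False
    note F = False
    then have yx: "dd n y x = dd n a x - dd n a y" using rel_le[of a n y x] assms by auto
    show ?thesis
    proof (cases "dd n a y \<le> dd n a z")
      case True
      then have "dd n y z = dd n a z - dd n a y" using rel_le[of a n y z] assms by auto
      then show ?thesis using zyx yx assms True F unfolding btw_def by auto
    next
      case False
      then have "dd n y z = dd n a z + n - dd n a y" using rel_gt[of a n y z] assms by auto
      then show ?thesis using zyx yx b by auto
    qed
  qed
  show ?thesis using POS_OUT[of a n b c z] Z assms unfolding btw_def by auto
qed

lemma mod_solve: "x = c - a" if "(a + x) mod n = (c::nat)" "a \<le> c" "c < n" "x < n"
proof (cases "a + x < n")
  case True
  then show ?thesis using that by auto
next
  case False
  then have "(a + x) mod n = (a + x - n) mod n" by (simp add: le_mod_geq)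
  also have "\<dots> = a + x - n" using that by auto
  finally show ?thesis using that by auto
qed

lemma COVER:
  fixes E :: "nat \<Rightarrow> nat"
  assumes E: "\<forall>k\<le>L. E k < n" and cyc: "E L = E 0" and mv: "k0 < L" "E (Suc k0) \<noteq> E k0"
    and z: "z < n" "\<forall>k<L. z \<noteq> E k"
  shows "\<exists>k<L. btw n (E k) z (E (Suc k))"
proof -
  define S where "S k = (\<Sum>i<k. dd n (E i) (E (Suc i)))" for k
  have n: "0 < n" using z by auto
  have Smod: "k \<le> L \<Longrightarrow> S k mod n = dd n (E 0) (E k)" for k
  proof (induction k)
    case 0
    then show ?case by (simp add: S_def)
  next
    case (Suc k)
    have "S (Suc k) mod n = (S k mod n + dd n (E k) (E (Suc k))) mod n"
      by (simp add: S_def mod_add_left_eq)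
    also have "\<dots> = (dd n (E 0) (E k) + dd n (E k) (E (Suc k))) mod n" using Suc by auto
    also have "\<dots> = dd n (E 0) (E (Suc k))" using dd_add[of "E 0" n "E k" "E (Suc k)"] E Suc.prems by auto
    finally show ?case .
  qed
  have "dd n (E k0) (E (Suc k0)) \<le> S L"
    unfolding S_def using mv by (intro member_le_sum) auto
  moreover have "dd n (E k0) (E (Suc k0)) > 0" using dd_0_iff[of "E k0" n "E (Suc k0)"] E mv by auto
  ultimately have SL: "S L > 0" by auto
  have "S L mod n = 0" using Smod[of L] cyc by auto
  then have SLn: "S L \<ge> n" using SL by (cases "S L < n") auto
  define Pz where "Pz = dd n (E 0) z"
  have Pz: "Pz < n" unfolding Pz_def using dd_lt[of "E 0" n z] E by auto
  have S0: "S 0 = 0" by (simp add: S_def)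
  obtain k where k: "k \<le> L \<and> S k \<le> Pz" "\<forall>k'. k' \<le> L \<and> S k' \<le> Pz \<longrightarrow> k' \<le> k"
  proof -
    have "0 \<le> L \<and> S 0 \<le> Pz" using S0 by simp
    moreover have "\<forall>y. y \<le> L \<and> S y \<le> Pz \<longrightarrow> y \<le> L" by simp
    ultimately have "\<exists>x. (x \<le> L \<and> S x \<le> Pz) \<and> (\<forall>y. y \<le> L \<and> S y \<le> Pz \<longrightarrow> y \<le> x)"
      by (rule Nat.ex_has_greatest_nat)
    then show ?thesis using that by blast
  qed
  have kL: "k < L"
  proof (rule ccontr)
    assume "\<not> k < L"
    then have "k = L" using k by linarith
    then show False using k(1) SLn Pz by auto
  qed
  have Sk1: "S (Suc k) > Pz"
  proof (rule ccontr)
    assume "\<not> S (Suc k) > Pz"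
    then have "Suc k \<le> k" using k(2)[rule_format, of "Suc k"] kL by linarith
    then show False by auto
  qed
  have Sk: "S k < n" using k Pz by auto
  have ek: "dd n (E 0) (E k) = S k" using Smod[of k] k Sk by auto
  have "Pz = (dd n (E 0) (E k) + dd n (E k) z) mod n"
    unfolding Pz_def using dd_add[of "E 0" n "E k" z] E kL z by auto
  then have ez: "dd n (E k) z = Pz - S k" using mod_solve[of "S k" "dd n (E k) z" n Pz] ek k Pz
      dd_lt[of "E k" n z] E kL by auto
  have "dd n (E k) z \<noteq> 0" using dd_0_iff[of "E k" n z] E kL z by auto
  moreover have "S (Suc k) = S k + dd n (E k) (E (Suc k))" by (simp add: S_def)
  ultimately have "btw n (E k) z (E (Suc k))" using ez Sk1 k unfolding btw_def by auto
  then show ?thesis using kL by auto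
qed

lemma mod_2P: "x < 2 * P \<Longrightarrow> (x::nat) mod P = (if x < P then x else x - P)"
proof (cases "x < P")
  case False
  assume a: "x < 2 * P"
  then have "x mod P = (x - P) mod P" using False by (simp add: le_mod_geq)
  also have "\<dots> = x - P" using a by auto
  finally show ?thesis using False by auto
qed auto

lemma odd_inj_aux:
  assumes "odd P" "b \<le> a" "a < P" "(2 * a) mod P = (2 * b) mod P"
  shows "(a::nat) = b"
proof -
  have "P dvd 2 * a - 2 * b" using mod_eq_dvd_iff_nat[of "2*b" "2*a" P] assms by auto
  then obtain c where c: "2 * a - 2 * b = P * c" by (auto elim: dvdE)
  have "P * c < P * 2" using c assms by linarith
  then have "c < 2" using mult_less_cancel1[of P c 2] by blast
  then have "c = 0 \<or> c = 1" by auto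
  then show ?thesis
  proof
    assume "c = 1"
    then have "P = 2 * (a - b)" using c by auto
    then show ?thesis using assms(1) by auto
  qed (use c assms in auto)
qed

lemma odd_inj:
  assumes "odd P" "a < P" "b < P" "(2 * a) mod P = (2 * b) mod P"
  shows "(a::nat) = b"
proof (cases "b \<le> a")
  case True
  then show ?thesis using odd_inj_aux assms by auto
next
  case False
  then show ?thesis using odd_inj_aux[of P a b] assms by auto
qed

lemma CYC:
  fixes u :: "nat \<Rightarrow> nat"
  assumes P: "0 < P" and lt: "\<forall>k<P. u k < n" and dist: "distinct (map u [0..<P])"
    and nb: "\<forall>k<P. \<forall>m<P. \<not> btw n (u k) (u m) (u (Suc k mod P))"
  shows "cyc_ordered (map u [0..<P])"
proof -
  obtain m0 where m0: "m0 < P" "\<forall>k<P. u m0 \<le> u k"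
  proof -
    have "finite (u ` {..<P})" "u ` {..<P} \<noteq> {}" using P by auto
    then have "Min (u ` {..<P}) \<in> u ` {..<P}" by (rule Min_in)
    then obtain m0 where m: "m0 < P" "u m0 = Min (u ` {..<P})" by auto
    have "\<forall>k<P. u m0 \<le> u k"
    proof (intro allI impI)
      fix k assume "k < P"
      then have "u k \<in> u ` {..<P}" by auto
      then show "u m0 \<le> u k" using m(2) Min_le[of "u ` {..<P}" "u k"] by auto
    qed
    then show ?thesis using that m(1) by blast
  qed
  have inj: "inj_on u {0..<P}" using dist by (simp add: distinct_map)
  let ?xs = "map u [0..<P]"
  have "sorted_wrt (<) (rotate m0 ?xs)"
  proof (subst sorted_wrt_iff_nth_Suc_transp)
    show "transp ((<) :: nat \<Rightarrow> nat \<Rightarrow> bool)" by (auto simp: transp_def)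
    show "\<forall>i. Suc i < length (rotate m0 ?xs) \<longrightarrow> rotate m0 ?xs ! i < rotate m0 ?xs ! Suc i"
    proof (intro allI impI)
      fix i assume i: "Suc i < length (rotate m0 ?xs)"
      then have iP: "Suc i < P" by simp
      define k where "k = (m0 + i) mod P"
      define k' where "k' = Suc k mod P"
      have kP: "k < P" "k' < P" using P by (auto simp: k_def k'_def)
      have r1: "rotate m0 ?xs ! i = u k" using iP by (simp add: nth_rotate k_def)
      have "(m0 + Suc i) mod P = k'" by (simp add: k_def k'_def mod_Suc_eq)
      then have r2: "rotate m0 ?xs ! Suc i = u k'" using iP kP by (simp add: nth_rotate)
      have kk: "k \<noteq> k'"
      proof
        assume "k = k'"
        then have "Suc k mod P = k" by (simp add: k'_def)
        show False
        proof (cases "Suc k < P")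
          case True
          then have "Suc k mod P = Suc k" by simp
          then show False using \<open>Suc k mod P = k\<close> by simp
        next
          case False
          then have "Suc k = P" using kP by simp
          then have "Suc k mod P = 0" by simp
          then have "k = 0" using \<open>Suc k mod P = k\<close> by simp
          then show False using \<open>Suc k = P\<close> iP by simp
        qed
      qed
      then have ne: "u k \<noteq> u k'" using inj kP by (auto simp: inj_on_def)
      have "u k < u k'"
      proof (rule ccontr)
        assume "\<not> u k < u k'"
        then have gt: "u k' < u k" using ne by auto
        have "k \<noteq> m0" using gt m0 kP by auto
        have "k' \<noteq> m0"
        proof
          assume "k' = m0"
          then have "(m0 + Suc i) mod P = m0 mod P" using \<open>(m0 + Suc i) mod P = k'\<close> m0 by auto
          then have "P dvd (m0 + Suc i) - m0" using mod_eq_dvd_iff_nat[of m0 "m0 + Suc i" P] by auto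
          then have "P dvd Suc i" by simp
          then show False using iP by (auto dest: dvd_imp_le)
        qed
        then have "u m0 \<noteq> u k'" using inj kP m0 by (auto simp: inj_on_def)
        then have "u m0 < u k'" using m0 kP by (auto simp: le_less)
        have l1: "u k < n" "u m0 < n" "u k' < n" using lt kP m0 by auto
        have "dd n (u k) (u m0) = u m0 + n - u k" "dd n (u k) (u k') = u k' + n - u k"
          using dd_if[of "u k" n "u m0"] dd_if[of "u k" n "u k'"] l1 gt \<open>u m0 < u k'\<close> by auto
        then have "btw n (u k) (u m0) (u k')"
          using gt l1 \<open>u m0 < u k'\<close> unfolding btw_def by auto
        moreover have "\<not> btw n (u k) (u m0) (u (Suc k mod P))" using nb kP m0 by blast
        ultimately show False unfolding k'_def by simp
      qed
      then show "rotate m0 ?xs ! i < rotate m0 ?xs ! Suc i" using r1 r2 by simp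
    qed
  qed
  then show ?thesis unfolding cyc_ordered_def by blast
qed

locale sat =
  fixes n r :: nat and H :: "nat set set"
  assumes r2: "2 \<le> r" and nr: "2 * r \<le> n" and sat: "M1_saturated n r H"
begin

lemma n4: "4 \<le> n" using r2 nr by auto

lemma HR: "H \<subseteq> r_sets n r" using sat by (simp add: M1_saturated_def)
lemma noM1: "\<not> has_M1 n H" using sat by (simp add: M1_saturated_def)
lemma satur: "e \<in> r_sets n r - H \<Longrightarrow> has_M1 n (insert e H)" using sat by (simp add: M1_saturated_def)

lemma edge_sub: "h \<in> H \<Longrightarrow> h \<subseteq> {0..<n}" using HR by (auto simp: r_sets_def)
lemma edge_card: "h \<in> H \<Longrightarrow> card h = r" using HR by (auto simp: r_sets_def)
lemma edge_lt: "h \<in> H \<Longrightarrow> x \<in> h \<Longrightarrow> x < n" using edge_sub[of h] by auto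
lemma edge_fin: "h \<in> H \<Longrightarrow> finite h" using edge_sub finite_subset by blast

lemma edge_not_single: "h \<in> H \<Longrightarrow> \<not> h \<subseteq> {a}"
proof
  assume h: "h \<in> H" "h \<subseteq> {a}"
  then have "card h \<le> card {a}" by (intro card_mono) auto
  then show False using edge_card[OF h(1)] r2 by auto
qed

lemma edge_ne: "h \<in> H \<Longrightarrow> h \<noteq> {}" using edge_not_single by blast

lemma NM:
  assumes "h1 \<in> H" "h2 \<in> H" "a < n" "b < n" "h1 \<subseteq> cint n a b" "h2 \<inter> cint n a b = {}"
  shows False
proof -
  have "a \<noteq> b"
  proof
    assume "a = b"
    then have "h1 \<subseteq> {a}" using assms cint_same[of a n] by auto
    then show False using edge_not_single assms by auto
  qed
  then have "has_M1 n H" unfolding has_M1_def using assms by blast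
  then show False using noM1 by auto
qed

lemma SAT:
  assumes e: "e \<subseteq> {0..<n}" "card e = r"
    and cond: "\<And>a b. a < n \<Longrightarrow> b < n \<Longrightarrow> e \<inter> cint n a b = {} \<Longrightarrow> \<forall>h\<in>H. \<not> h \<subseteq> cint n a b"
  shows "e \<in> H"
proof (rule ccontr)
  assume nH: "e \<notin> H"
  then have "e \<in> r_sets n r - H" using e by (auto simp: r_sets_def)
  then have "has_M1 n (insert e H)" by (rule satur)
  then obtain h1 h2 u u' where h: "h1 \<in> insert e H" "h2 \<in> insert e H" "u < n" "u' < n" "u \<noteq> u'"
    "h1 \<subseteq> cint n u u'" "h2 \<inter> cint n u u' = {}"
    unfolding has_M1_def by blast
  have ene: "e \<noteq> {}" using e r2 by auto
  consider "h1 \<in> H" "h2 \<in> H" | "h1 = e" "h2 = e" | "h1 \<in> H" "h2 = e" | "h1 = e" "h2 \<in> H"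
    using h by auto
  then show False
  proof cases
    case 1
    then have "has_M1 n H" unfolding has_M1_def using h by blast
    then show False using noM1 by auto
  next
    case 2
    then have "e = {}" using h by auto
    then show False using ene by auto
  next
    case 3
    then show False using cond[of u u'] h by auto
  next
    case 4
    obtain y where y: "y \<in> h2" using edge_ne 4 by blast
    have yn: "y < n" using edge_lt 4 y by auto
    have ynot: "y \<notin> cint n u u'" using h y by auto
    have s1: "h2 \<subseteq> cint n (vsucc n u') (vpred n u)"
    proof
      fix x assume "x \<in> h2"
      then have "x < n" "x \<notin> cint n u u'" using edge_lt[OF 4(2)] h by auto
      then show "x \<in> cint n (vsucc n u') (vpred n u)" using compl1[of u n u' x] h by auto
    qed
    have s2: "e \<inter> cint n (vsucc n u') (vpred n u) = {}"
    proof -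
      have "x \<notin> cint n (vsucc n u') (vpred n u)" if "x \<in> e" for x
        using compl2[of u n u' y x] that h 4 ynot yn by auto
      then show ?thesis by auto
    qed
    have "\<forall>k\<in>H. \<not> k \<subseteq> cint n (vsucc n u') (vpred n u)"
      using cond[of "vsucc n u'" "vpred n u"] s2 vsucc_lt[of u' n] vpred_lt[of u n] h by auto
    then show False using s1 4 by blast
  qed
qed

lemma H_ne: "H \<noteq> {}"
proof
  assume H0: "H = {}"
  have "{0..<r} \<in> H"
    by (rule SAT) (use nr H0 in auto)
  then show False using H0 by auto
qed

lemma SMALL:
  assumes c: "c < n" "d < n" and cardK: "card (cint n c d) < r"
  shows "\<exists>h\<in>H. h \<inter> cint n c d = {}"
proof (rule ccontr)
  assume A: "\<not> (\<exists>h\<in>H. h \<inter> cint n c d = {})"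
  have D: "dd n c d + 2 < n" using cardK card_cint[of c n d] c nr r2 by auto
  define a where "a = vpred n c"
  define b where "b = vsucc n d"
  have ab: "a < n" "b < n" using vpred_lt vsucc_lt c unfolding a_def b_def by auto
  have pa: "dd n c a = n - 1" using dd_vpred_right[of c n c] c unfolding a_def by auto
  have pb: "dd n c b = dd n c d + 1" using dd_vsucc[of c n d] c D unfolding b_def by auto
  have an: "a \<notin> cint n c d" using pa D c ab by (auto simp: mem_cint)
  have bn: "b \<notin> cint n c d" using pb D c ab by (auto simp: mem_cint)
  have abne: "a \<noteq> b" using pa pb D by auto
  define K' where "K' = cint n b a"
  have dba: "dd n b a = n - 1 - (dd n c d + 1)" using rel_le[of c n b a] pa pb c ab D by auto
  have cK': "card K' = n - dd n c d - 1" using card_cint[of b n a] ab dba D unfolding K'_def by auto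
  have aK: "a \<in> K'" "b \<in> K'" using cint_left cint_right ab unfolding K'_def by auto
  have finK: "finite K'" unfolding K'_def cint_def by auto
  have "card (K' - {a, b}) = card K' - 2" using aK abne finK by (simp add: card_Diff_subset)
  then have "r - 2 \<le> card (K' - {a, b})" using cK' D cardK card_cint[of c n d] c nr by auto
  then obtain T where T: "T \<subseteq> K' - {a, b}" "card T = r - 2" "finite T"
    using obtain_subset_with_card_n by metis
  define e where "e = insert a (insert b T)"
  have "a \<notin> T" "b \<notin> T" using T by auto
  then have "card e = Suc (Suc (card T))" using T(3) abne unfolding e_def by auto
  then have ecard: "card e = r" using T(2) r2 by auto
  have eK: "e \<subseteq> K'" using T aK unfolding e_def by auto
  have esub: "e \<subseteq> {0..<n}" using eK unfolding K'_def cint_def by auto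
  have K'dis: "K' \<inter> cint n c d = {}"
  proof -
    have "x \<notin> K'" if "x \<in> cint n c d" for x
      using compl2[of c n d b x] that c ab bn unfolding K'_def a_def b_def by auto
    then show ?thesis by auto
  qed
  have "e \<in> H"
  proof (rule SAT[OF esub ecard])
    fix u v assume uv: "u < n" "v < n" "e \<inter> cint n u v = {}"
    show "\<forall>h\<in>H. \<not> h \<subseteq> cint n u v"
    proof (intro ballI notI)
      fix h assume hH: "h \<in> H" and hs: "h \<subseteq> cint n u v"
      have "h \<inter> cint n c d \<noteq> {}" using A hH by auto
      then obtain z where z: "z \<in> h" "z \<in> cint n c d" by auto
      have zn: "z < n" using edge_lt hH z by auto
      have nu: "vpred n c \<notin> cint n u v" "vsucc n d \<notin> cint n u v"
        using uv unfolding e_def a_def[symmetric] b_def[symmetric] by auto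
      have "h \<subseteq> cint n c d"
      proof
        fix x assume "x \<in> h"
        then show "x \<in> cint n c d"
          using INT_IN[of c n d u v z x] c uv zn z hs D nu edge_lt[OF hH] by auto
      qed
      then have "card h \<le> card (cint n c d)" by (intro card_mono) (auto simp: cint_def)
      then show False using edge_card hH cardK by auto
    qed
  qed
  moreover have "e \<inter> cint n c d = {}" using eK K'dis by auto
  ultimately show False using A by auto
qed

end

context sat begin

definition mp :: "nat \<Rightarrow> nat \<Rightarrow> bool" where
  "mp p q \<longleftrightarrow> p < n \<and> q < n \<and> p \<noteq> q \<and> (\<exists>h\<in>H. p \<in> h \<and> q \<in> h \<and> h \<subseteq> cint n q p) \<and>
     (\<forall>h\<in>H. \<not> h \<subseteq> cint n q (vpred n p)) \<and> (\<forall>h\<in>H. \<not> h \<subseteq> cint n (vsucc n q) p)"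

lemma single_ne: "h \<in> H \<Longrightarrow> a < n \<Longrightarrow> \<not> h \<subseteq> cint n a a"
  using edge_not_single cint_same by auto

lemma EXIST: "\<exists>p q. mp p q"
proof -
  define Q where "Q k \<longleftrightarrow> (\<exists>a b. a < n \<and> b < n \<and> a \<noteq> b \<and> dd n a b = k \<and> (\<exists>h\<in>H. h \<subseteq> cint n b a))" for k
  obtain h0 where h0: "h0 \<in> H" using H_ne by auto
  have "h0 \<subseteq> cint n 1 0"
  proof
    fix x assume "x \<in> h0"
    then have "x < n" using edge_lt h0 by auto
    then show "x \<in> cint n 1 0" using n4 dd_lt[of 1 n x] by (auto simp: mem_cint dd_if)
  qed
  moreover have "dd n 0 1 = 1" using n4 by (auto simp: dd_if)
  ultimately have Q1: "Q 1" unfolding Q_def using n4 h0 by (intro exI[of _ 0] exI[of _ 1]) auto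
  have bnd: "\<forall>k. Q k \<longrightarrow> k \<le> n" unfolding Q_def using dd_lt by (auto simp: less_imp_le)
  obtain K where K: "Q K" "\<forall>k. Q k \<longrightarrow> k \<le> K" using Nat.ex_has_greatest_nat[OF Q1 bnd] by blast
  then obtain p q h where pq: "p < n" "q < n" "p \<noteq> q" "dd n p q = K" "h \<in> H" "h \<subseteq> cint n q p"
    unfolding Q_def by blast
  have bigS: False if "f \<in> H" "f \<subseteq> cint n (vsucc n q) p" for f
  proof -
    have ne: "vsucc n q \<noteq> p" using that single_ne pq by auto
    have "dd n p (vsucc n q) = K + 1" using AR1[of p n q] ne pq by auto
    then have "Q (K+1)" unfolding Q_def using pq that ne vsucc_lt[of q n]
      by (intro exI[of _ p] exI[of _ "vsucc n q"]) auto
    then show False using K(2) by fastforce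
  qed
  have bigP: False if "f \<in> H" "f \<subseteq> cint n q (vpred n p)" for f
  proof -
    have ne: "vpred n p \<noteq> q" using that single_ne pq by auto
    have "dd n (vpred n p) q = K + 1" using AR2[of p n q] ne pq by auto
    then have "Q (K+1)" unfolding Q_def using pq that ne vpred_lt[of p n]
      by (intro exI[of _ "vpred n p"] exI[of _ q]) auto
    then show False using K(2) by fastforce
  qed
  have qh: "q \<in> h"
  proof (rule ccontr)
    assume "q \<notin> h"
    then have "h \<subseteq> cint n (vsucc n q) p" using AR3[of q n p] pq edge_lt by blast
    then show False using bigS pq by blast
  qed
  have ph: "p \<in> h"
  proof (rule ccontr)
    assume "p \<notin> h"
    then have "h \<subseteq> cint n q (vpred n p)" using AR4[of q n p] pq edge_lt by blast
    then show False using bigP pq by blast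
  qed
  have "mp p q" unfolding mp_def using pq qh ph bigS bigP by blast
  then show ?thesis by blast
qed

lemma MPLAM: assumes "mp p q" shows "lam n H p = q"
proof -
  from assms have pq: "p < n" "q < n" "p \<noteq> q" and ex: "\<exists>h\<in>H. p \<in> h \<and> q \<in> h \<and> h \<subseteq> cint n q p"
    and no2: "\<forall>h\<in>H. \<not> h \<subseteq> cint n (vsucc n q) p" unfolding mp_def by auto
  show ?thesis unfolding lam_def
  proof (rule the_equality)
    show "q < n \<and> (\<exists>h\<in>H. p \<in> h \<and> h \<subseteq> cint n q p) \<and> \<not> (\<exists>h\<in>H. p \<in> h \<and> h \<subseteq> cint n (vsucc n q) p)"
      using pq ex no2 by blast
  next
    fix u assume u: "u < n \<and> (\<exists>h\<in>H. p \<in> h \<and> h \<subseteq> cint n u p) \<and> \<not> (\<exists>h\<in>H. p \<in> h \<and> h \<subseteq> cint n (vsucc n u) p)"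
    show "u = q"
    proof (rule ccontr)
      assume "u \<noteq> q"
      then have "cint n u p \<subseteq> cint n (vsucc n q) p \<or> cint n q p \<subseteq> cint n (vsucc n u) p"
        using AR5[of u n q p] u pq by auto
      then show False
      proof
        assume s: "cint n u p \<subseteq> cint n (vsucc n q) p"
        from u obtain h where "h \<in> H" "h \<subseteq> cint n u p" by blast
        then show False using s no2 by blast
      next
        assume s: "cint n q p \<subseteq> cint n (vsucc n u) p"
        from ex obtain h where "h \<in> H" "p \<in> h" "h \<subseteq> cint n q p" by blast
        then show False using s u by blast
      qed
    qed
  qed
qed

lemma MPRHO: assumes "mp p q" shows "rho n H q = p"
proof -
  from assms have pq: "p < n" "q < n" "p \<noteq> q" and ex: "\<exists>h\<in>H. p \<in> h \<and> q \<in> h \<and> h \<subseteq> cint n q p"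
    and no1: "\<forall>h\<in>H. \<not> h \<subseteq> cint n q (vpred n p)" unfolding mp_def by auto
  show ?thesis unfolding rho_def
  proof (rule the_equality)
    show "p < n \<and> (\<exists>h\<in>H. q \<in> h \<and> h \<subseteq> cint n q p) \<and> \<not> (\<exists>h\<in>H. q \<in> h \<and> h \<subseteq> cint n q (vpred n p))"
      using pq ex no1 by blast
  next
    fix u assume u: "u < n \<and> (\<exists>h\<in>H. q \<in> h \<and> h \<subseteq> cint n q u) \<and> \<not> (\<exists>h\<in>H. q \<in> h \<and> h \<subseteq> cint n q (vpred n u))"
    show "u = p"
    proof (rule ccontr)
      assume "u \<noteq> p"
      then have "cint n q u \<subseteq> cint n q (vpred n p) \<or> cint n q p \<subseteq> cint n q (vpred n u)"
        using AR6[of u n q p] u pq by auto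
      then show False
      proof
        assume s: "cint n q u \<subseteq> cint n q (vpred n p)"
        from u obtain h where "h \<in> H" "h \<subseteq> cint n q u" by blast
        then show False using s no1 by blast
      next
        assume s: "cint n q p \<subseteq> cint n q (vpred n u)"
        from ex obtain h where "h \<in> H" "q \<in> h" "h \<subseteq> cint n q p" by blast
        then show False using s u by blast
      qed
    qed
  qed
qed

end

context sat begin

lemma MAIN:
  assumes "mp p q"
  shows "\<exists>t. mp q t \<and> btw n p t q"
proof -
  from assms have pq: "p < n" "q < n" "p \<noteq> q"
    and no1: "\<forall>h\<in>H. \<not> h \<subseteq> cint n q (vpred n p)" and no2: "\<forall>h\<in>H. \<not> h \<subseteq> cint n (vsucc n q) p"
    unfolding mp_def by auto
  from assms obtain h where h: "h \<in> H" "p \<in> h" "q \<in> h" "h \<subseteq> cint n q p" unfolding mp_def by blast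
  have Q1: "1 \<le> dd n p q" using dd_0_iff[of p n q] pq by auto
  have big: "r \<le> dd n p q"
  proof (rule ccontr)
    assume "\<not> r \<le> dd n p q"
    have "dd n p (vpred n q) = dd n p q - 1" using dd_vpred_right[of p n q] pq by auto
    then have "card (cint n p (vpred n q)) = dd n p q" using card_cint[of p n "vpred n q"] pq vpred_lt[of q n] Q1
      by auto
    then have "card (cint n p (vpred n q)) < r" using \<open>\<not> r \<le> dd n p q\<close> by auto
    then obtain f where f: "f \<in> H" "f \<inter> cint n p (vpred n q) = {}"
      using SMALL[of p "vpred n q"] pq vpred_lt[of q n] by auto
    have "f \<subseteq> cint n q (vpred n p)"
    proof
      fix x assume x: "x \<in> f"
      then have "x < n" "x \<notin> cint n p (vpred n q)" using f edge_lt by auto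
      then have "x \<in> cint n (vsucc n (vpred n q)) (vpred n p)"
        using compl1[of p n "vpred n q" x] pq vpred_lt[of q n] by auto
      then show "x \<in> cint n q (vpred n p)" using vsucc_vpred[of q n] pq by auto
    qed
    then show False using no1 f by blast
  qed
  have Q2: "2 \<le> dd n p q" using big r2 by auto
  define p1 where "p1 = vsucc n p"
  have p1n: "p1 < n" using vsucc_lt pq unfolding p1_def by auto
  have dp1: "dd n p p1 = 1" using dd_vsucc[of p n p] pq n4 unfolding p1_def by auto
  have p1q: "p1 \<noteq> q" using vsucc_ne[of p n q] pq Q2 unfolding p1_def by auto
  define Rg where "Rg = {x. x < n \<and> 2 \<le> dd n p x \<and> dd n p x \<le> dd n p q - 1}"
  have cRg: "card Rg = dd n p q - 2"
    using card_range[of p n "dd n p q - 1" 2] pq dd_lt[of p n q] Q2 unfolding Rg_def by auto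
  then have "r - 2 \<le> card Rg" using big by auto
  then obtain T where T: "T \<subseteq> Rg" "card T = r - 2" "finite T"
    by (rule obtain_subset_with_card_n)
  define e where "e = insert q (insert p1 T)"
  have qT: "q \<notin> T" "p1 \<notin> T" using T dp1 unfolding Rg_def by auto
  have ecard: "card e = r" using qT T p1q r2 unfolding e_def by auto
  have Tn: "x \<in> T \<Longrightarrow> x < n" for x using T unfolding Rg_def by auto
  have esub: "e \<subseteq> {0..<n}" using Tn pq p1n unfolding e_def by auto
  have bp1: "btw n p p1 q" using dp1 Q2 unfolding btw_def by auto
  have hdis: "h \<inter> cint n p1 (vpred n q) = {}"
  proof -
    have "x \<notin> cint n p1 (vpred n q)" if "x \<in> h" for x
      using AR8[of p n q p1 x] pq p1n bp1 h that edge_lt by auto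
    then show ?thesis by auto
  qed
  have eH: "e \<in> H"
  proof (rule SAT[OF esub ecard])
    fix a b assume ab: "a < n" "b < n" "e \<inter> cint n a b = {}"
    show "\<forall>k\<in>H. \<not> k \<subseteq> cint n a b"
    proof (intro ballI notI)
      fix k assume k: "k \<in> H" "k \<subseteq> cint n a b"
      have qn: "q \<notin> cint n a b" "p1 \<notin> cint n a b" using ab unfolding e_def by auto
      have aa: "a \<in> cint n a b" using cint_left ab by auto
      have an: "a \<noteq> q" "a \<noteq> p1" using qn aa by auto
      have "btw n q a p1 \<or> btw n p1 a q" using TWO_a[of q p1 n a] p1q pq p1n ab an by auto
      then show False
      proof
        assume bq: "btw n q a p1"
        have "k \<subseteq> cint n (vsucc n q) p"
        proof
          fix z assume z: "z \<in> k"
          then have zn: "z < n" using edge_lt k by auto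
          have "btw n q z p1" using TWO_b[of a n b q p1 z] ab pq p1n zn qn bq z k by auto
          then show "z \<in> cint n (vsucc n q) p" using M1[of p n q z] pq Q2 zn unfolding p1_def by auto
        qed
        then show False using no2 k by blast
      next
        assume bq: "btw n p1 a q"
        have "k \<subseteq> cint n p1 (vpred n q)"
        proof
          fix z assume z: "z \<in> k"
          then have zn: "z < n" using edge_lt k by auto
          have "btw n p1 z q" using TWO_b[of a n b p1 q z] ab pq p1n zn qn bq z k by auto
          then show "z \<in> cint n p1 (vpred n q)" using M2[of p n q z] pq Q2 zn unfolding p1_def by auto
        qed
        then show False using NM[of k h p1 "vpred n q"] k h hdis p1n vpred_lt[of q n] pq by auto
      qed
    qed
  qed
  have eint: "e \<subseteq> cint n p1 q"
  proof
    fix x assume "x \<in> e"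
    then consider "x = q" | "x = p1" | "x \<in> T" unfolding e_def by auto
    then show "x \<in> cint n p1 q"
    proof cases
      case 1 then show ?thesis using cint_right p1n pq by auto
    next
      case 2 then show ?thesis using cint_left p1n pq by auto
    next
      case 3 then show ?thesis using M4[of p n q x] T pq Q2 unfolding Rg_def p1_def by auto
    qed
  qed
  define Pt where "Pt k \<longleftrightarrow> (\<exists>t g. t < n \<and> t \<noteq> q \<and> dd n q t = k \<and> g \<in> H \<and> q \<in> g \<and> g \<subseteq> cint n t q)" for k
  have Pt1: "Pt (dd n q p1)" unfolding Pt_def using p1n p1q eH eint unfolding e_def by blast
  have bnd: "\<forall>k. Pt k \<longrightarrow> k \<le> n" unfolding Pt_def using dd_lt[of q n] pq by (auto simp: less_imp_le)
  obtain K where K: "Pt K" "\<forall>k. Pt k \<longrightarrow> k \<le> K" using Nat.ex_has_greatest_nat[OF Pt1 bnd] by blast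
  then obtain t g where tg: "t < n" "t \<noteq> q" "dd n q t = K" "g \<in> H" "q \<in> g" "g \<subseteq> cint n t q"
    unfolding Pt_def by blast
  have grow: False if "f \<in> H" "q \<in> f" "f \<subseteq> cint n (vsucc n t) q" for f
  proof -
    have ne: "vsucc n t \<noteq> q" using that single_ne pq by auto
    have "dd n q (vsucc n t) = K + 1" using AR1[of q n t] ne pq tg by auto
    then have "Pt (K+1)" unfolding Pt_def using that ne vsucc_lt[of t n] tg
      by (intro exI[of _ "vsucc n t"] exI[of _ f]) auto
    then show False using K(2) by fastforce
  qed
  have tin: "t \<in> g"
  proof (rule ccontr)
    assume "t \<notin> g"
    then have "g \<subseteq> cint n (vsucc n t) q" using AR3[of t n q] tg pq edge_lt by blast
    then show False using grow tg by blast
  qed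
  have "dd n q p1 \<le> K" using K(2) Pt1 by blast
  then have bt: "btw n p t q" using AR7[of p n q t] pq tg p1q unfolding p1_def by auto
  have n1: "\<forall>f\<in>H. \<not> f \<subseteq> cint n t (vpred n q)"
  proof (intro ballI notI)
    fix f assume f: "f \<in> H" "f \<subseteq> cint n t (vpred n q)"
    have "h \<inter> cint n t (vpred n q) = {}"
    proof -
      have "x \<notin> cint n t (vpred n q)" if "x \<in> h" for x
        using AR8[of p n q t x] pq tg bt h that edge_lt by auto
      then show ?thesis by auto
    qed
    then show False using NM[of f h t "vpred n q"] f h tg vpred_lt[of q n] pq by auto
  qed
  have n2: "\<forall>f\<in>H. \<not> f \<subseteq> cint n (vsucc n t) q"
  proof (intro ballI notI)
    fix f assume f: "f \<in> H" "f \<subseteq> cint n (vsucc n t) q"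
    have ne: "vsucc n t \<noteq> q" using f single_ne pq by auto
    show False
    proof (cases "q \<in> f")
      case True
      then show False using grow f by blast
    next
      case False
      have fs: "f \<subseteq> cint n (vsucc n t) (vpred n q)"
      proof
        fix x assume x: "x \<in> f"
        then have "x \<noteq> q" using False by auto
        then show "x \<in> cint n (vsucc n t) (vpred n q)"
          using AR4[of "vsucc n t" n q x] f x vsucc_lt[of t n] tg pq by auto
      qed
      have bt2: "btw n p (vsucc n t) q" using AR9[of p n q t] pq tg bt ne by auto
      have "h \<inter> cint n (vsucc n t) (vpred n q) = {}"
      proof -
        have "x \<notin> cint n (vsucc n t) (vpred n q)" if "x \<in> h" for x
          using AR8[of p n q "vsucc n t" x] pq vsucc_lt[of t n] tg bt2 h that edge_lt by auto
        then show ?thesis by auto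
      qed
      then show False using NM[of f h "vsucc n t" "vpred n q"] f fs h tg vsucc_lt[of t n] vpred_lt[of q n] pq
        by auto
    qed
  qed
  have "mp q t" unfolding mp_def using pq tg tin n1 n2 by blast
  then show ?thesis using bt by blast
qed

end

context sat begin

lemma mp_ne: "mp p q \<Longrightarrow> p \<noteq> q" unfolding mp_def by auto
lemma mp_lt: "mp p q \<Longrightarrow> p < n \<and> q < n" unfolding mp_def by auto

lemma final:
  shows "\<exists>l \<ge> 1. \<exists>w :: nat \<Rightarrow> nat.
     (\<forall>i < 2*l+1. w i < n) \<and> distinct (map w [0..<2*l+1]) \<and>
     cyc_ordered (map (\<lambda>j. w (2*j)) [0..<l+1] @ map (\<lambda>j. w (2*j+1)) [0..<l]) \<and>
     (\<forall>i < 2*l+1. lam n H (w i) = w ((i + 1) mod (2*l+1)) \<and>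
                  rho n H (w i) = w ((i + 2*l) mod (2*l+1)))"
proof -
  obtain p0 q0 where mp0: "mp p0 q0" using EXIST by blast
  define w where "w i = (lam n H ^^ i) p0" for i
  have wS: "w (Suc i) = lam n H (w i)" for i by (simp add: w_def)
  have w0: "w 0 = p0" by (simp add: w_def)
  have MP: "mp (w i) (w (Suc i))" for i
  proof (induction i)
    case 0
    then show ?case using mp0 MPLAM[OF mp0] wS[of 0] w0 by simp
  next
    case (Suc i)
    obtain t where t: "mp (w (Suc i)) t" using MAIN[OF Suc] by blast
    have "w (Suc (Suc i)) = t" using MPLAM[OF t] wS[of "Suc i"] by simp
    then show ?case using t by simp
  qed
  have BT: "btw n (w i) (w (Suc (Suc i))) (w (Suc i))" for i
  proof -
    obtain t where t: "mp (w (Suc i)) t" "btw n (w i) t (w (Suc i))" using MAIN[OF MP[of i]] by blast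
    have "w (Suc (Suc i)) = t" using MPLAM[OF t(1)] wS[of "Suc i"] by simp
    then show ?thesis using t by simp
  qed
  have wlt: "w i < n" for i using mp_lt[OF MP[of i]] by simp
  have rhoS: "rho n H (w (Suc i)) = w i" for i using MPRHO[OF MP[of i]] .
  have bkw: "w a = w b \<Longrightarrow> m \<le> a \<Longrightarrow> m \<le> b \<Longrightarrow> w (a - m) = w (b - m)" for a b m
  proof (induction m)
    case 0
    then show ?case by simp
  next
    case (Suc m)
    then have IH: "w (a - m) = w (b - m)" by simp
    have ea: "a - m = Suc (a - Suc m)" "b - m = Suc (b - Suc m)" using Suc.prems by auto
    have "w (a - Suc m) = rho n H (w (a - m))" using rhoS[of "a - Suc m"] ea by simp
    also have "\<dots> = rho n H (w (b - m))" using IH by simp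
    also have "\<dots> = w (b - Suc m)" using rhoS[of "b - Suc m"] ea by simp
    finally show ?case .
  qed
  have "\<not> inj_on w {..n}"
  proof
    assume "inj_on w {..n}"
    then have "card (w ` {..n}) = Suc n" by (simp add: card_image)
    moreover have "w ` {..n} \<subseteq> {..<n}" using wlt by auto
    then have "card (w ` {..n}) \<le> n" using card_mono[of "{..<n}" "w ` {..n}"] by auto
    ultimately show False by auto
  qed
  then obtain i j where ij: "i < j" "w i = w j"
    unfolding inj_on_def by (metis linorder_neqE_nat)
  have "w (i - i) = w (j - i)" using bkw[OF ij(2), of i] ij by auto
  then have ex: "\<exists>P. 0 < P \<and> w P = w 0" using ij by (intro exI[of _ "j - i"]) auto
  define P where "P = (LEAST P. 0 < P \<and> w P = w 0)"
  have P: "0 < P" "w P = w 0" using LeastI_ex[OF ex] unfolding P_def by auto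
  have Pmin: "0 < P' \<Longrightarrow> w P' = w 0 \<Longrightarrow> P \<le> P'" for P' unfolding P_def by (rule Least_le) simp
  have per: "w (i + P) = w i" for i
  proof (induction i)
    case 0
    then show ?case using P by simp
  next
    case (Suc i)
    then show ?case using wS[of "i + P"] wS[of i] by simp
  qed
  have perk: "w (x + k * P) = w x" for x k
  proof (induction k)
    case 0
    then show ?case by simp
  next
    case (Suc k)
    have e: "x + Suc k * P = (x + k * P) + P" by simp
    show ?case unfolding e per Suc.IH by simp
  qed
  have permod: "w x = w (x mod P)" for x
    using perk[of "x mod P" "x div P"] by (simp add: mod_div_mult_eq)
  have inj: "a < P \<Longrightarrow> b < P \<Longrightarrow> w a = w b \<Longrightarrow> a = b" for a b
  proof -
    have aux: "a < b \<Longrightarrow> b < P \<Longrightarrow> w a = w b \<Longrightarrow> False" for a b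
    proof -
      assume ab: "a < b" "b < P" "w a = w b"
      have "w (a - a) = w (b - a)" using bkw[OF ab(3), of a] ab by auto
      then have "w (b - a) = w 0" by simp
      then have "P \<le> b - a" using Pmin[of "b - a"] ab by auto
      then show False using ab by auto
    qed
    assume "a < P" "b < P" "w a = w b"
    then show "a = b" using aux[of a b] aux[of b a] by (cases "a < b"; cases "b < a") auto
  qed
  have NP: "\<not> btw n (w i) (w m) (w (Suc (Suc i)))" for i m
  proof
    assume bx: "btw n (w i) (w m) (w (Suc (Suc i)))"
    define a where "a = w i"
    define b where "b = w (Suc i)"
    define c where "c = w (Suc (Suc i))"
    define x where "x = w m"
    define y where "y = w (Suc m)"
    have lt: "a < n" "b < n" "c < n" "x < n" "y < n" using wlt unfolding a_def b_def c_def x_def y_def by auto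
    have bacb: "btw n a c b" using BT[of i] unfolding a_def b_def c_def by simp
    have baxc: "btw n a x c" using bx unfolding a_def x_def c_def by simp
    obtain ha where ha: "ha \<in> H" "ha \<subseteq> cint n b a" using MP[of i] unfolding mp_def a_def b_def by blast
    obtain hb where hb: "hb \<in> H" "hb \<subseteq> cint n c b" using MP[of "Suc i"] unfolding mp_def b_def c_def by blast
    obtain hx where hx: "hx \<in> H" "hx \<subseteq> cint n y x" using MP[of m] unfolding mp_def x_def y_def by blast
    have nox: "\<forall>f\<in>H. \<not> f \<subseteq> cint n y (vpred n x)" using MP[of m] unfolding mp_def x_def y_def by blast
    have xy: "0 < dd n x y" using mp_ne[OF MP[of m]] dd_0_iff[of x n y] lt unfolding x_def y_def by auto
    show False
    proof (cases "dd n x y \<le> dd n x b")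
      case True
      have "ha \<subseteq> cint n y (vpred n x)"
      proof
        fix z assume "z \<in> ha"
        then have "z \<in> cint n b a" using ha by auto
        then show "z \<in> cint n y (vpred n x)"
          using AR10[of a n b c x y z] lt bacb baxc xy True unfolding btw_def by auto
      qed
      then show False using nox ha by blast
    next
      case False
      have "hx \<inter> cint n c b = {}"
      proof -
        have "z \<notin> cint n c b" if "z \<in> hx" for z
        proof -
          have zc: "z \<in> cint n y x" "z < n" using hx that edge_lt by auto
          show ?thesis using AR11[of a n b c x y z] lt bacb baxc False zc by auto
        qed
        then show ?thesis by auto
      qed
      then show False using NM[of hb hx c b] hb hx lt by auto
    qed
  qed
  have P1: "P \<noteq> 1"
  proof
    assume "P = 1"
    then have "w 1 = w 0" using P by simp
    then show False using mp_ne[OF MP[of 0]] by simp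
  qed
  have P2: "P \<noteq> 2"
  proof
    assume "P = 2"
    then have "w 2 = w 0" using P by simp
    moreover have "0 < dd n (w 0) (w 2)" using BT[of 0] unfolding btw_def by (simp add: numeral_2_eq_2)
    ultimately show False by simp
  qed
  have oddP: "odd P"
  proof (rule ccontr)
    assume "\<not> odd P"
    then obtain L where L: "P = 2 * L" by (auto elim: evenE)
    then have L1: "0 < L" using P by auto
    define E where "E k = w (2 * k)" for k
    have E1: "\<forall>k\<le>L. E k < n" using wlt unfolding E_def by auto
    have E2: "E L = E 0" using P L unfolding E_def by simp
    have E3: "E (Suc 0) \<noteq> E 0"
    proof -
      have "0 < dd n (w 0) (w 2)" using BT[of 0] unfolding btw_def by (simp add: numeral_2_eq_2)
      then show ?thesis unfolding E_def by auto
    qed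
    have z1: "w 1 < n" using wlt by auto
    have z2: "\<forall>k<L. w 1 \<noteq> E k"
    proof (intro allI impI)
      fix k assume "k < L"
      then have "2 * k < P" "1 < P" using L P1 P by auto
      then show "w 1 \<noteq> E k" using inj[of 1 "2 * k"] unfolding E_def by auto
    qed
    obtain k where k: "k < L" "btw n (E k) (w 1) (E (Suc k))"
      using COVER[OF E1 E2 L1 E3 z1 z2] by blast
    then show False using NP[of "2 * k" 1] unfolding E_def by simp
  qed
  define l where "l = P div 2"
  have Pl: "P = 2 * l + 1" using oddP unfolding l_def by presburger
  have l1: "1 \<le> l" using Pl P1 P by auto
  have xs: "map (\<lambda>j. w (2*j)) [0..<l+1] @ map (\<lambda>j. w (2*j+1)) [0..<l] = map (\<lambda>k. w (2*k)) [0..<2*l+1]"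
  proof (rule nth_equalityI)
    show "length (map (\<lambda>j. w (2*j)) [0..<l+1] @ map (\<lambda>j. w (2*j+1)) [0..<l]) = length (map (\<lambda>k. w (2*k)) [0..<2*l+1])"
      by simp
    fix k assume k: "k < length (map (\<lambda>j. w (2*j)) [0..<l+1] @ map (\<lambda>j. w (2*j+1)) [0..<l])"
    then have k2: "k < 2 * l + 1" by simp
    show "(map (\<lambda>j. w (2*j)) [0..<l+1] @ map (\<lambda>j. w (2*j+1)) [0..<l]) ! k = map (\<lambda>k. w (2*k)) [0..<2*l+1] ! k"
    proof (cases "k < l + 1")
      case True
      then show ?thesis using k2 by (simp add: nth_append del: upt_Suc)
    next
      case False
      then have lhs: "(map (\<lambda>j. w (2*j)) [0..<l+1] @ map (\<lambda>j. w (2*j+1)) [0..<l]) ! k = w (2 * (k - (l+1)) + 1)"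
        using k2 False by (simp add: nth_append del: upt_Suc)
      have "2 * (k - (l+1)) + 1 + P = 2 * k" using False Pl by auto
      then have "w (2 * (k - (l+1)) + 1) = w (2 * k)" using per[of "2 * (k - (l+1)) + 1"] by simp
      moreover have "map (\<lambda>k. w (2*k)) [0..<2*l+1] ! k = w (2 * k)" using k2 by (simp del: upt_Suc)
      ultimately show ?thesis using lhs by simp
    qed
  qed
  have cyc: "cyc_ordered (map (\<lambda>k. w (2*k)) [0..<P])"
  proof (rule CYC)
    show "0 < P" using P by simp
    show "\<forall>k<P. w (2*k) < n" using wlt by auto
    show "distinct (map (\<lambda>k. w (2*k)) [0..<P])"
    proof (subst distinct_map, intro conjI)
      show "distinct [0..<P]" by simp
      show "inj_on (\<lambda>k. w (2 * k)) (set [0..<P])"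
      proof (rule inj_onI)
        fix a b assume ab: "a \<in> set [0..<P]" "b \<in> set [0..<P]" "w (2 * a) = w (2 * b)"
        then have "w ((2 * a) mod P) = w ((2 * b) mod P)" using permod[of "2*a"] permod[of "2*b"] by simp
        then have "(2 * a) mod P = (2 * b) mod P" using inj P by simp
        then show "a = b" using odd_inj[of P a b] oddP ab by auto
      qed
    qed
    show "\<forall>k<P. \<forall>m<P. \<not> btw n (w (2*k)) (w (2*m)) (w (2 * (Suc k mod P)))"
    proof (intro allI impI)
      fix k m assume "k < P" "m < P"
      have "w (2 * (Suc k mod P)) = w ((2 * (Suc k mod P)) mod P)" using permod by blast
      also have "(2 * (Suc k mod P)) mod P = (2 * Suc k) mod P" by (simp add: mod_mult_right_eq)
      also have "w \<dots> = w (Suc (Suc (2 * k)))" using permod[of "Suc (Suc (2*k))"] by simp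
      finally have "w (2 * (Suc k mod P)) = w (Suc (Suc (2 * k)))" .
      then show "\<not> btw n (w (2*k)) (w (2*m)) (w (2 * (Suc k mod P)))" using NP[of "2*k" "2*m"] by simp
    qed
  qed
  show ?thesis
  proof (intro exI[of _ l] conjI exI[of _ w] l1 allI impI)
    show "\<And>i. i < 2 * l + 1 \<Longrightarrow> w i < n" using wlt by auto
    show "distinct (map w [0..<2 * l + 1])"
      unfolding Pl[symmetric] by (subst distinct_map) (use inj in \<open>auto simp: inj_on_def\<close>)
    show "cyc_ordered (map (\<lambda>j. w (2 * j)) [0..<l + 1] @ map (\<lambda>j. w (2 * j + 1)) [0..<l])"
      using cyc xs Pl by simp
    fix i assume i: "i < 2 * l + 1"
    show "lam n H (w i) = w ((i + 1) mod (2 * l + 1))"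
      using wS[of i] permod[of "Suc i"] Pl by simp
    have "rho n H (w i) = rho n H (w (Suc (i + 2 * l)))" using per[of i] Pl by simp
    also have "\<dots> = w (i + 2 * l)" using rhoS by simp
    also have "\<dots> = w ((i + 2 * l) mod (2 * l + 1))" using permod[of "i + 2*l"] Pl by simp
    finally show "rho n H (w i) = w ((i + 2 * l) mod (2 * l + 1))" .
  qed
qed

end

theorem lemma3p6:
  fixes n r :: nat and H :: "nat set set"
  assumes "r \<ge> 2" and "n \<ge> 2 * r" and "M1_saturated n r H"
  shows "\<exists>l \<ge> 1. \<exists>w :: nat \<Rightarrow> nat.
     (\<forall>i < 2*l+1. w i < n) \<and> distinct (map w [0..<2*l+1]) \<and>
     cyc_ordered (map (\<lambda>j. w (2*j)) [0..<l+1] @ map (\<lambda>j. w (2*j+1)) [0..<l]) \<and>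
     (\<forall>i < 2*l+1. lam n H (w i) = w ((i + 1) mod (2*l+1)) \<and>
                  rho n H (w i) = w ((i + 2*l) mod (2*l+1)))"
proof -
  interpret sat n r H using assms by unfold_locales auto
  show ?thesis by (rule final)
qed

end
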